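(* Let $V$ be a vertex operator superalgebra and $g$ an automorphism of $V$ of finite order. If $M$ is a simple $g\sigma$-twisted $V$-module, then $g\circ M\cong M$. In particular, every simple (untwisted) $V$-module $M$ satisfies $\sigma\circ M\cong M$.
   Context: A vertex operator superalgebra (VOSA) $V=V_{\bar0}\oplus V_{\bar1}$ has the following structure. - Vertex operators $Y(v,z)=\sum v(n)z^{-n-1}$, vacuum $\mathbf1$, and conformal vector $\omega$ with $Y(\omega,z)=\sum L(n)z^{-n-2}$. - The super Jacobi identity holds with sign $\epsilon_{u,v}=(-1)^{\tilde u\tilde v}$. - $V=\bigoplus_{n\in\frac12\mathbb Z}V_n$ by $L(0)$-weight, with $V_{\bar0}$ integral and $V_{\bar1}$ half-integral weights. Automorphisms fix $\mathbf1,\omega$ and satisfy $gY(v,z)g^{-1}=Y(gv,z)$. $\sigma$ is the parity automorphism ($(-1)^i$ on $V_{\bar i}$). For an automorphism $x$ of order $T$, with $T'$ the order of $x\sigma$ and $V^r=\{v:xv=e^{-2\pi ir/T}v\}$: an $x$-twisted module is a space $M$ with $Y_M(v,z)=\sum_{n\in r/T+\mathbb Z}v(n)z^{-n-1}$ for $v\in V^r$, which is truncated, has $Y_M(\mathbf1,z)=\mathrm{id}$, and satisfies $z_0^{-1}\delta(\frac{z_1-z_2}{z_0})Y_M(u,z_1)Y_M(v,z_2)-\epsilon_{u,v}z_0^{-1}\delta(\frac{z_2-z_1}{-z_0})Y_M(v,z_2)Y_M(u,z_1)=z_2^{-1}(\frac{z_1-z_0}{z_2})^{-r/T}\delta(\frac{z_1-z_0}{z_2})Y_M(Y(u,z_0)v,z_2)$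 for $u\in V^r$. It is moreover the direct sum of finite-dimensional $L(0)$-eigenspaces $M_\lambda$ with $M_{\lambda+n/T'}=0$ for $n\ll0$. For $k\in\mathrm{Aut}(V)$, $k\circ M$ is the $kxk^{-1}$-twisted module equal to $M$ as a space with $Y_{k\circ M}(v,z)=Y_M(k^{-1}v,z)$. *)

theory Defs
  imports Complex_Main "HOL-Library.Groups_Big_Fun"
begin

text \<open>A vertex operator
  (super)algebra is given by its modes: Y u n v = u(n)v, i.e. Y(u,z) = sum u(n) z^(-n-1).
  Infinite sums with finitely many nonzero terms are expressed by Sum_any.\<close>

text \<open>L(0)-weight space of weight lam; L(0) = omega(1).\<close>
definition wt_space :: "(complex \<Rightarrow> 'v \<Rightarrow> 'v) \<Rightarrow> ('v \<Rightarrow> int \<Rightarrow> 'v \<Rightarrow> 'v) \<Rightarrow> 'v \<Rightarrow> complex \<Rightarrow> 'v set"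
  where "wt_space smul Y om lam = {v. Y om 1 v = smul lam v}"

definition par_space :: "(complex \<Rightarrow> 'v::ab_group_add \<Rightarrow> 'v) \<Rightarrow> ('v \<Rightarrow> int \<Rightarrow> 'v \<Rightarrow> 'v) \<Rightarrow> 'v \<Rightarrow> nat \<Rightarrow> 'v set"
  where "par_space smul Y om p =
    module.span smul (\<Union>k\<in>{k::int. k mod 2 = int p}. wt_space smul Y om (of_int k / 2))"

definition fin_dim :: "(complex \<Rightarrow> 'v::ab_group_add \<Rightarrow> 'v) \<Rightarrow> 'v set \<Rightarrow> bool"
  where "fin_dim smul S = (\<exists>B. finite B \<and> S \<subseteq> module.span smul B)"

definition is_VOSA :: "(complex \<Rightarrow> 'v::ab_group_add \<Rightarrow> 'v) \<Rightarrow> ('v \<Rightarrow> int \<Rightarrow> 'v \<Rightarrow> 'v) \<Rightarrow> 'v \<Rightarrow> 'v \<Rightarrow> bool"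
  where "is_VOSA smul Y vac om =
   (vector_space smul \<and>
    (\<forall>u n. Vector_Spaces.linear smul smul (Y u n)) \<and>
    (\<forall>n v. Vector_Spaces.linear smul smul (\<lambda>u. Y u n v)) \<and>
    \<comment> \<open>truncation\<close>
    (\<forall>u v. \<exists>N::int. \<forall>n\<ge>N. Y u n v = 0) \<and>
    \<comment> \<open>vacuum and creation\<close>
    (\<forall>n v. Y vac n v = (if n = -1 then v else 0)) \<and>
    (\<forall>v n. n \<ge> 0 \<longrightarrow> Y v n vac = 0) \<and>
    (\<forall>v. Y v (-1) vac = v) \<and>
    \<comment> \<open>super Jacobi identity, in components (Borcherds identity)\<close>
    (\<forall>p q u v. p < 2 \<longrightarrow> q < 2 \<longrightarrow> u \<in> par_space smul Y om p \<longrightarrow> v \<in> par_space smul Y om q \<longrightarrow>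
      (\<forall>(m::int) (n::int) (l::int) w.
        Sum_any (\<lambda>i::nat. smul ((of_int m::complex) gchoose i) (Y (Y u (l + int i) v) (m + n - int i) w))
        = Sum_any (\<lambda>i::nat. smul ((-1)^i * ((of_int l::complex) gchoose i))
            (Y u (m + l - int i) (Y v (n + int i) w)
             - smul ((-1)^(p*q) * (-1) ^ nat \<bar>l\<bar>) (Y v (n + l - int i) (Y u (m + int i) w)))))) \<and>
    \<comment> \<open>Virasoro relations for L(n) = omega(n+1)\<close>
    (\<exists>c::complex. \<forall>(m::int) (n::int) v.
       Y om (m+1) (Y om (n+1) v) - Y om (n+1) (Y om (m+1) v)
       = smul (of_int (m - n)) (Y om (m+n+1) v)
         + smul (if m + n = 0 then (of_int m ^ 3 - of_int m) / 12 * c else 0) v) \<and>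
    \<comment> \<open>L(-1)-derivative property: Y(L(-1)u,z) = d/dz Y(u,z)\<close>
    (\<forall>u n w. Y (Y om 0 u) n w = smul (- of_int n) (Y u (n - 1) w)) \<and>
    om \<in> wt_space smul Y om 2 \<and>
    \<comment> \<open>grading by L(0)-weights in 1/2 Z, finite-dimensional, bounded below\<close>
    module.span smul (\<Union>k::int. wt_space smul Y om (of_int k / 2)) = UNIV \<and>
    (\<forall>k::int. fin_dim smul (wt_space smul Y om (of_int k / 2))) \<and>
    (\<exists>N::int. \<forall>k<N. wt_space smul Y om (of_int k / 2) = {0}))"

definition is_aut :: "(complex \<Rightarrow> 'v::ab_group_add \<Rightarrow> 'v) \<Rightarrow> ('v \<Rightarrow> int \<Rightarrow> 'v \<Rightarrow> 'v) \<Rightarrow> 'v \<Rightarrow> 'v \<Rightarrow> ('v \<Rightarrow> 'v) \<Rightarrow> bool"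
  where "is_aut smul Y vac om g =
    (Vector_Spaces.linear smul smul g \<and> bij g \<and> g vac = vac \<and> g om = om \<and>
     (\<forall>u n v. g (Y u n v) = Y (g u) n (g v)))"

definition finite_order :: "('v \<Rightarrow> 'v) \<Rightarrow> bool"
  where "finite_order g = (\<exists>k::nat. k > 0 \<and> g ^^ k = id)"

definition aut_order :: "('v \<Rightarrow> 'v) \<Rightarrow> nat"
  where "aut_order g = (LEAST k::nat. k > 0 \<and> g ^^ k = id)"

definition is_parity_aut :: "(complex \<Rightarrow> 'v::ab_group_add \<Rightarrow> 'v) \<Rightarrow> ('v \<Rightarrow> int \<Rightarrow> 'v \<Rightarrow> 'v) \<Rightarrow> 'v \<Rightarrow> ('v \<Rightarrow> 'v) \<Rightarrow> bool"
  where "is_parity_aut smul Y om sig =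
    (Vector_Spaces.linear smul smul sig \<and>
     (\<forall>v \<in> par_space smul Y om 0. sig v = v) \<and>
     (\<forall>v \<in> par_space smul Y om 1. sig v = - v))"

definition eig_part :: "(complex \<Rightarrow> 'v \<Rightarrow> 'v) \<Rightarrow> ('v \<Rightarrow> 'v) \<Rightarrow> nat \<Rightarrow> 'v set"
  where "eig_part smul x r =
    {v. x v = smul (exp (- 2 * of_real pi * \<i> * of_nat r / of_nat (aut_order x))) v}"

text \<open>x-twisted module, with modes YM v q = v(q) for rational q,
  i.e. Y_M(v,z) = sum v(q) z^(-q-1); L(0) on M is omega(1).\<close>
definition is_twisted_module ::
  "(complex \<Rightarrow> 'v::ab_group_add \<Rightarrow> 'v) \<Rightarrow> ('v \<Rightarrow> int \<Rightarrow> 'v \<Rightarrow> 'v) \<Rightarrow> 'v \<Rightarrow> 'v \<Rightarrow> ('v \<Rightarrow> 'v) \<Rightarrow> ('v \<Rightarrow> 'v)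
   \<Rightarrow> (complex \<Rightarrow> 'm::ab_group_add \<Rightarrow> 'm) \<Rightarrow> ('v \<Rightarrow> rat \<Rightarrow> 'm \<Rightarrow> 'm) \<Rightarrow> bool"
  where "is_twisted_module smul Y vac om sig x smulM YM =
   (let T = aut_order x; T' = aut_order (x \<circ> sig) in
    vector_space smulM \<and>
    (\<forall>v q. Vector_Spaces.linear smulM smulM (YM v q)) \<and>
    (\<forall>q w. Vector_Spaces.linear smul smulM (\<lambda>v. YM v q w)) \<and>
    \<comment> \<open>for v in V^r only modes in r/T + Z occur\<close>
    (\<forall>r<T. \<forall>v\<in>eig_part smul x r. \<forall>q::rat. q - of_nat r / of_nat T \<notin> \<int> \<longrightarrow> (\<forall>w. YM v q w = 0)) \<and>
    \<comment> \<open>truncation\<close>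
    (\<forall>v w. \<exists>N::rat. \<forall>q>N. YM v q w = 0) \<and>
    \<comment> \<open>Y_M(1,z) = id\<close>
    (\<forall>q w. YM vac q w = (if q = -1 then w else 0)) \<and>
    \<comment> \<open>twisted super Jacobi identity, in components\<close>
    (\<forall>r<T. \<forall>p<2. \<forall>s<2. \<forall>u v.
       u \<in> eig_part smul x r \<longrightarrow> u \<in> par_space smul Y om p \<longrightarrow> v \<in> par_space smul Y om s \<longrightarrow>
       (\<forall>(m::rat) (n::rat) (l::int) w. m - of_nat r / of_nat T \<in> \<int> \<longrightarrow>
        Sum_any (\<lambda>i::nat. smulM ((of_rat m::complex) gchoose i)
                     (YM (Y u (l + int i) v) (m + n - of_nat i) w))
        = Sum_any (\<lambda>i::nat. smulM ((-1)^i * ((of_int l::complex) gchoose i))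
            (YM u (m + of_int l - of_nat i) (YM v (n + of_nat i) w)
             - smulM ((-1)^(p*s) * (-1) ^ nat \<bar>l\<bar>) (YM v (n + of_int l - of_nat i) (YM u (m + of_nat i) w)))))) \<and>
    \<comment> \<open>M is the direct sum of finite-dimensional L(0)-eigenspaces M_lam,
        with M_(lam + n/T') = 0 for n << 0\<close>
    module.span smulM (\<Union>lam. {w. YM om 1 w = smulM lam w}) = UNIV \<and>
    (\<forall>lam. fin_dim smulM {w. YM om 1 w = smulM lam w}) \<and>
    (\<forall>lam. \<exists>N::int. \<forall>n<N. {w. YM om 1 w = smulM (lam + of_int n / of_nat T') w} = {0}))"

definition simple_module :: "(complex \<Rightarrow> 'm::ab_group_add \<Rightarrow> 'm) \<Rightarrow> ('v \<Rightarrow> rat \<Rightarrow> 'm \<Rightarrow> 'm) \<Rightarrow> bool"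
  where "simple_module smulM YM =
    ((\<exists>w::'m. w \<noteq> 0) \<and>
     (\<forall>W. module.subspace smulM W \<longrightarrow> (\<forall>v q w. w \<in> W \<longrightarrow> YM v q w \<in> W) \<longrightarrow> W = {0} \<or> W = UNIV))"

definition comp_module :: "('v \<Rightarrow> 'v) \<Rightarrow> ('v \<Rightarrow> rat \<Rightarrow> 'm \<Rightarrow> 'm) \<Rightarrow> ('v \<Rightarrow> rat \<Rightarrow> 'm \<Rightarrow> 'm)"
  where "comp_module k YM = (\<lambda>v. YM (inv k v))"

definition module_iso :: "(complex \<Rightarrow> 'm::ab_group_add \<Rightarrow> 'm) \<Rightarrow> ('v \<Rightarrow> rat \<Rightarrow> 'm \<Rightarrow> 'm) \<Rightarrow> ('v \<Rightarrow> rat \<Rightarrow> 'm \<Rightarrow> 'm) \<Rightarrow> bool"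
  where "module_iso smulM Y1 Y2 =
    (\<exists>phi. Vector_Spaces.linear smulM smulM phi \<and> bij phi \<and>
       (\<forall>v q w. phi (Y1 v q w) = Y2 v q (phi w)))"

end

theory Submission imports Defs "HOL-Analysis.Complex_Transcendental" begin


lemma lin_add: "Vector_Spaces.linear s1 s2 f \<Longrightarrow> f (a + b) = f a + f b"
  by (simp add: linear_iff_module_hom module_hom.add)
lemma lin_scale: "Vector_Spaces.linear s1 s2 f \<Longrightarrow> f (s1 c a) = s2 c (f a)"
  by (simp add: linear_iff_module_hom module_hom.scale)
lemma lin_0: "Vector_Spaces.linear s1 s2 f \<Longrightarrow> f 0 = 0"
  by (simp add: linear_iff_module_hom module_hom.zero)
lemma lin_diff: "Vector_Spaces.linear s1 s2 f \<Longrightarrow> f (a - b) = f a - f b"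
  by (simp add: linear_iff_module_hom module_hom.diff)
lemma lin_neg: "Vector_Spaces.linear s1 s2 f \<Longrightarrow> f (- a) = - f a"
  by (simp add: linear_iff_module_hom module_hom.neg)
lemma lin_sum: "Vector_Spaces.linear s1 s2 f \<Longrightarrow> f (sum g S) = (\<Sum>a\<in>S. f (g a))"
  by (simp add: linear_iff_module_hom module_hom.sum)
lemma lin_vs1: "Vector_Spaces.linear s1 s2 f \<Longrightarrow> vector_space s1"
  by (simp add: Vector_Spaces.linear_def)
lemma lin_vs2: "Vector_Spaces.linear s1 s2 f \<Longrightarrow> vector_space s2"
  by (simp add: Vector_Spaces.linear_def)

locale spec =
  fixes sM :: "complex \<Rightarrow> 'm::ab_group_add \<Rightarrow> 'm" and L :: "'m \<Rightarrow> 'm"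
  assumes linL: "Vector_Spaces.linear sM sM L"
    and spanE: "module.span sM (\<Union>lam. {w. L w = sM lam w}) = UNIV"
begin

sublocale vs: vector_space sM using lin_vs1[OF linL] .

definition E where "E lam = {w. L w = sM lam w}"

lemma E_0: "0 \<in> E lam" by (simp add: E_def lin_0[OF linL])
lemma E_add: "a \<in> E lam \<Longrightarrow> b \<in> E lam \<Longrightarrow> a + b \<in> E lam"
  by (simp add: E_def lin_add[OF linL] vs.scale_right_distrib)
lemma E_scale: "a \<in> E lam \<Longrightarrow> sM c a \<in> E lam"
  by (simp add: E_def lin_scale[OF linL] mult.commute)
lemma E_diff: "a \<in> E lam \<Longrightarrow> b \<in> E lam \<Longrightarrow> a - b \<in> E lam"
  by (simp add: E_def lin_diff[OF linL] vs.scale_right_diff_distrib)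

definition rep where
  "rep S f w \<longleftrightarrow> finite S \<and> (\<forall>lam. f lam \<in> E lam) \<and> (\<forall>lam. lam \<notin> S \<longrightarrow> f lam = 0) \<and> w = sum f S"

lemma indep:
  assumes "finite S" "\<forall>lam\<in>S. f lam \<in> E lam" "sum f S = 0"
  shows "\<forall>lam\<in>S. f lam = 0"
  using assms
proof (induction S arbitrary: f rule: finite_induct)
  case empty then show ?case by simp
next
  case (insert mu S f)
  define g where "g lam = sM (lam - mu) (f lam)" for lam
  have gE: "\<forall>lam\<in>S. g lam \<in> E lam" using insert.prems(1) by (simp add: g_def E_scale)
  have fmu: "f mu = - sum f S" using insert.prems(2) insert.hyps
    by (simp add: eq_neg_iff_add_eq_0)
  have "sum g S = (\<Sum>lam\<in>S. L (f lam)) - (\<Sum>lam\<in>S. sM mu (f lam))"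
    unfolding g_def using insert.prems(1)
    by (simp add: vs.scale_left_diff_distrib sum_subtractf E_def)
  also have "\<dots> = L (sum f S) - sM mu (sum f S)"
    by (simp add: lin_sum[OF linL] vs.scale_sum_right)
  also have "\<dots> = 0"
  proof -
    have "L (f mu) = sM mu (f mu)" using insert.prems(1) by (simp add: E_def)
    then show ?thesis using fmu by (simp add: lin_neg[OF linL])
  qed
  finally have "\<forall>lam\<in>S. g lam = 0" using insert.IH gE by blast
  then have fS: "\<forall>lam\<in>S. f lam = 0" using insert.hyps(2) by (auto simp: g_def)
  then have "sum f S = 0" by simp
  then show ?case using fS fmu by simp
qed

lemma rep_exists: "\<exists>S f. rep S f w"
proof -
  have "w \<in> module.span sM (\<Union>lam. {w. L w = sM lam w})" using spanE by simp
  then show ?thesis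
  proof (induction rule: vs.span_induct_alt)
    case base
    show ?case by (rule exI[of _ "{}"], rule exI[of _ "\<lambda>_. 0"]) (simp add: rep_def E_0)
  next
    case (step c x y)
    then obtain S f where r: "rep S f y" by blast
    from step(1) obtain mu where xmu: "x \<in> E mu" by (auto simp: E_def)
    define f' where "f' = f(mu := sM c x + f mu)"
    have fin: "finite S" using r by (simp add: rep_def)
    have "sum f' (insert mu S) = f' mu + sum f' (S - {mu})"
      using fin by (simp add: sum.insert_remove)
    also have "sum f' (S - {mu}) = sum f (S - {mu})"
      by (rule sum.cong) (auto simp: f'_def)
    also have "f' mu + sum f (S - {mu}) = sM c x + (f mu + sum f (S - {mu}))"
      by (simp add: f'_def add.assoc)
    also have "f mu + sum f (S - {mu}) = sum f (insert mu S)"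
      using fin by (simp add: sum.insert_remove)
    also have "sum f (insert mu S) = sum f S"
      using r fin by (cases "mu \<in> S") (auto simp: rep_def insert_absorb)
    finally have "sum f' (insert mu S) = sM c x + y" using r by (simp add: rep_def)
    moreover have "\<forall>lam. f' lam \<in> E lam" using r xmu
      by (auto simp: f'_def rep_def intro!: E_add E_scale)
    ultimately have "rep (insert mu S) f' (sM c x + y)"
      using r by (auto simp: rep_def f'_def)
    then show ?case by blast
  qed
qed

lemma rep_unique:
  assumes "rep S f w" "rep S' f' w"
  shows "f = f'"
proof
  fix lam
  let ?h = "\<lambda>lam. f lam - f' lam"
  have fin: "finite (S \<union> S')" using assms by (simp add: rep_def)
  have s1: "sum f (S \<union> S') = sum f S"
    using assms(1) fin by (intro sum.mono_neutral_right) (auto simp: rep_def)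
  have s2: "sum f' (S \<union> S') = sum f' S'"
    using assms(2) fin by (intro sum.mono_neutral_right) (auto simp: rep_def)
  have "sum ?h (S \<union> S') = 0"
    using s1 s2 assms by (simp add: sum_subtractf rep_def)
  moreover have "\<forall>lam\<in>S \<union> S'. ?h lam \<in> E lam" using assms by (auto simp: rep_def intro: E_diff)
  ultimately have "\<forall>lam\<in>S \<union> S'. ?h lam = 0" using indep[OF fin, of ?h] by blast
  then show "f lam = f' lam" using assms by (cases "lam \<in> S \<union> S'") (auto simp: rep_def)
qed

definition Psi :: "(complex \<Rightarrow> complex) \<Rightarrow> 'm \<Rightarrow> 'm" where
  "Psi phi w = (SOME v. \<exists>S f. rep S f w \<and> v = (\<Sum>lam\<in>S. sM (phi lam) (f lam)))"

lemma rep_sum_indep: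
  assumes "rep S f w" "rep S' f w"
  shows "(\<Sum>lam\<in>S. sM (phi lam) (f lam)) = (\<Sum>lam\<in>S'. sM (phi lam) (f lam))"
proof -
  have fin: "finite (S \<union> S')" using assms by (simp add: rep_def)
  have "(\<Sum>lam\<in>S \<union> S'. sM (phi lam) (f lam)) = (\<Sum>lam\<in>S. sM (phi lam) (f lam))"
    using assms(1) fin by (intro sum.mono_neutral_right) (auto simp: rep_def)
  moreover have "(\<Sum>lam\<in>S \<union> S'. sM (phi lam) (f lam)) = (\<Sum>lam\<in>S'. sM (phi lam) (f lam))"
    using assms(2) fin by (intro sum.mono_neutral_right) (auto simp: rep_def)
  ultimately show ?thesis by simp
qed

lemma Psi_eq: assumes "rep S f w" shows "Psi phi w = (\<Sum>lam\<in>S. sM (phi lam) (f lam))"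
proof -
  have "\<exists>S f. rep S f w \<and> Psi phi w = (\<Sum>lam\<in>S. sM (phi lam) (f lam))"
    unfolding Psi_def by (rule someI_ex) (use assms in blast)
  then obtain S' f' where "rep S' f' w" "Psi phi w = (\<Sum>lam\<in>S'. sM (phi lam) (f lam))"
    using rep_unique[OF assms] by metis
  then show ?thesis using rep_sum_indep[OF assms, of S'] rep_unique[OF assms] by simp
qed

lemma rep_add: "rep S f w \<Longrightarrow> rep S' f' w' \<Longrightarrow> rep (S \<union> S') (\<lambda>lam. f lam + f' lam) (w + w')"
proof -
  assume a: "rep S f w" "rep S' f' w'"
  have fin: "finite (S \<union> S')" using a by (simp add: rep_def)
  have s1: "sum f (S \<union> S') = sum f S"
    using a(1) fin by (intro sum.mono_neutral_right) (auto simp: rep_def)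
  have s2: "sum f' (S \<union> S') = sum f' S'"
    using a(2) fin by (intro sum.mono_neutral_right) (auto simp: rep_def)
  show ?thesis using a fin s1 s2 by (auto simp: rep_def sum.distrib intro: E_add)
qed

lemma rep_scale: "rep S f w \<Longrightarrow> rep S (\<lambda>lam. sM c (f lam)) (sM c w)"
  by (auto simp: rep_def vs.scale_sum_right intro: E_scale)

lemma rep_Psi: "rep S f w \<Longrightarrow> rep S (\<lambda>lam. sM (phi lam) (f lam)) (Psi phi w)"
  by (auto simp: rep_def Psi_eq intro: E_scale)

lemma rep_E: "w \<in> E mu \<Longrightarrow> rep {mu} (\<lambda>lam. if lam = mu then w else 0) w"
  by (auto simp: rep_def E_0)

lemma Psi_E: "w \<in> E mu \<Longrightarrow> Psi phi w = sM (phi mu) w"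
  using Psi_eq[OF rep_E] by simp

lemma Psi_linear: "Vector_Spaces.linear sM sM (Psi phi)"
proof -
  have A1: "Psi phi (a + b) = Psi phi a + Psi phi b" for a b
  proof -
    obtain S f S' f' where r: "rep S f a" "rep S' f' b" using rep_exists by metis
    have fin: "finite (S \<union> S')" using r by (simp add: rep_def)
    have s1: "(\<Sum>lam\<in>S \<union> S'. sM (phi lam) (f lam)) = (\<Sum>lam\<in>S. sM (phi lam) (f lam))"
      using r(1) fin by (intro sum.mono_neutral_right) (auto simp: rep_def)
    have s2: "(\<Sum>lam\<in>S \<union> S'. sM (phi lam) (f' lam)) = (\<Sum>lam\<in>S'. sM (phi lam) (f' lam))"
      using r(2) fin by (intro sum.mono_neutral_right) (auto simp: rep_def)
    show ?thesis using Psi_eq[OF rep_add[OF r]] Psi_eq[OF r(1)] Psi_eq[OF r(2)] s1 s2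
      by (simp add: vs.scale_right_distrib sum.distrib)
  qed
  have A2: "Psi phi (sM c a) = sM c (Psi phi a)" for c a
  proof -
    obtain S f where r: "rep S f a" using rep_exists by metis
    show ?thesis using Psi_eq[OF rep_scale[OF r]] Psi_eq[OF r]
      by (simp add: vs.scale_sum_right mult.commute)
  qed
  show ?thesis
    unfolding Vector_Spaces.linear_def module_hom_iff
    using vs.vector_space_axioms vs.module_axioms A1 A2 by simp
qed

lemma Psi_comp: "Psi chi (Psi phi w) = Psi (\<lambda>lam. chi lam * phi lam) w"
proof -
  obtain S f where r: "rep S f w" using rep_exists by metis
  show ?thesis using Psi_eq[OF rep_Psi[OF r]] Psi_eq[OF r] by simp
qed

lemma Psi_one: "Psi (\<lambda>_. 1) w = w"
proof -
  obtain S f where r: "rep S f w" using rep_exists by metis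
  show ?thesis using Psi_eq[OF r] r by (simp add: rep_def)
qed

lemma eq_on_E:
  assumes "Vector_Spaces.linear sM sM A" "Vector_Spaces.linear sM sM B"
    and "\<And>lam w. w \<in> E lam \<Longrightarrow> A w = B w"
  shows "A w = B w"
proof -
  obtain S f where r: "rep S f w" using rep_exists by metis
  then have "w = sum f S" by (simp add: rep_def)
  then show ?thesis using assms r by (auto simp: lin_sum rep_def intro!: sum.cong)
qed

end



lemma V_vs: "is_VOSA smul Y vac om \<Longrightarrow> vector_space smul" by (simp add: is_VOSA_def)
lemma V_lin1: "is_VOSA smul Y vac om \<Longrightarrow> Vector_Spaces.linear smul smul (Y u n)" by (simp add: is_VOSA_def)
lemma V_lin2: "is_VOSA smul Y vac om \<Longrightarrow> Vector_Spaces.linear smul smul (\<lambda>u. Y u n v)" by (simp add: is_VOSA_def)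
lemma V_cre: "is_VOSA smul Y vac om \<Longrightarrow> n \<ge> 0 \<Longrightarrow> Y v n vac = 0" by (simp add: is_VOSA_def)
lemma V_cre1: "is_VOSA smul Y vac om \<Longrightarrow> Y v (-1) vac = v" by (simp add: is_VOSA_def)
lemma V_der: "is_VOSA smul Y vac om \<Longrightarrow> Y (Y om 0 u) n w = smul (- of_int n) (Y u (n - 1) w)"
  by (simp add: is_VOSA_def)
lemma V_omwt: "is_VOSA smul Y vac om \<Longrightarrow> om \<in> wt_space smul Y om 2" by (simp add: is_VOSA_def)
lemma V_span: "is_VOSA smul Y vac om \<Longrightarrow> module.span smul (\<Union>k::int. wt_space smul Y om (of_int k / 2)) = UNIV"
  by (simp add: is_VOSA_def)

lemma V_Lm1: assumes "is_VOSA smul Y vac om" shows "Y om 0 u = Y u (-2) vac"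
proof -
  interpret vector_space smul using V_vs[OF assms] .
  have "Y (Y om 0 u) (-1) vac = Y om 0 u" using V_cre1[OF assms] .
  moreover have "Y (Y om 0 u) (-1) vac = Y u (-2) vac"
    using V_der[OF assms, of u "-1" vac] by simp
  ultimately show ?thesis by simp
qed

lemma wt_par:
  assumes "is_VOSA smul Y vac om" "u \<in> wt_space smul Y om (of_int k / 2)"
  shows "u \<in> par_space smul Y om (nat (k mod 2))"
proof -
  interpret vector_space smul using V_vs[OF assms(1)] .
  have "u \<in> (\<Union>k'\<in>{k'::int. k' mod 2 = int (nat (k mod 2))}. wt_space smul Y om (of_int k' / 2))"
    using assms(2) by auto
  then show ?thesis unfolding par_space_def by (rule span_base)
qed

lemma vac_wt: assumes "is_VOSA smul Y vac om" shows "vac \<in> wt_space smul Y om (of_int 0 / 2)"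
proof -
  interpret vector_space smul using V_vs[OF assms] .
  show ?thesis using V_cre[OF assms, of 1 om] by (simp add: wt_space_def)
qed

lemma om_wt: assumes "is_VOSA smul Y vac om" shows "om \<in> wt_space smul Y om (of_int 4 / 2)"
  using V_omwt[OF assms] by simp

lemma M_facts:
  assumes "is_twisted_module smul Y vac om sig x smulM YM"
  shows M_lin1: "Vector_Spaces.linear smulM smulM (YM v q)"
    and M_lin2: "Vector_Spaces.linear smul smulM (\<lambda>v. YM v q w)"
    and M_vac: "YM vac q w = (if q = -1 then w else 0)"
    and M_span: "module.span smulM (\<Union>lam. {w. YM om 1 w = smulM lam w}) = UNIV"
  using assms unfolding is_twisted_module_def Let_def by simp_all

lemma M_modes:
  assumes "is_twisted_module smul Y vac om sig x smulM YM"
   "r < aut_order x" "v \<in> eig_part smul x r" "q - of_nat r / of_nat (aut_order x) \<notin> \<int>"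
  shows "YM v q w = 0"
proof -
  have "\<forall>r<aut_order x. \<forall>v\<in>eig_part smul x r. \<forall>q::rat. q - of_nat r / of_nat (aut_order x) \<notin> \<int> \<longrightarrow> (\<forall>w. YM v q w = 0)"
    using assms(1) unfolding is_twisted_module_def Let_def by simp
  then show ?thesis using assms(2-) by blast
qed

lemma M_jac:
  assumes "is_twisted_module smul Y vac om sig x smulM YM"
    "r < aut_order x" "p < 2" "s < 2" "u \<in> eig_part smul x r" "u \<in> par_space smul Y om p"
    "v \<in> par_space smul Y om s" "m - of_nat r / of_nat (aut_order x) \<in> \<int>"
  shows "Sum_any (\<lambda>i::nat. smulM ((of_rat m::complex) gchoose i)
                     (YM (Y u (l + int i) v) (m + n - of_nat i) w))
        = Sum_any (\<lambda>i::nat. smulM ((-1)^i * ((of_int l::complex) gchoose i))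
            (YM u (m + of_int l - of_nat i) (YM v (n + of_nat i) w)
             - smulM ((-1)^(p * s) * (-1) ^ nat \<bar>l\<bar>) (YM v (n + of_int l - of_nat i) (YM u (m + of_nat i) w))))"
proof -
  have "\<forall>r<aut_order x. \<forall>p<2. \<forall>s<2. \<forall>u v.
       u \<in> eig_part smul x r \<longrightarrow> u \<in> par_space smul Y om p \<longrightarrow> v \<in> par_space smul Y om s \<longrightarrow>
       (\<forall>(m::rat) (n::rat) (l::int) w. m - of_nat r / of_nat (aut_order x) \<in> \<int> \<longrightarrow>
        Sum_any (\<lambda>i::nat. smulM ((of_rat m::complex) gchoose i)
                     (YM (Y u (l + int i) v) (m + n - of_nat i) w))
        = Sum_any (\<lambda>i::nat. smulM ((-1)^i * ((of_int l::complex) gchoose i))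
            (YM u (m + of_int l - of_nat i) (YM v (n + of_nat i) w)
             - smulM ((-1)^(p * s) * (-1) ^ nat \<bar>l\<bar>) (YM v (n + of_int l - of_nat i) (YM u (m + of_nat i) w)))))"
    using assms(1) unfolding is_twisted_module_def Let_def by simp
  then show ?thesis using assms(2-) by blast
qed




lemma M_der:
  assumes V: "is_VOSA smul Y vac om" and M: "is_twisted_module smul Y vac om sig x smulM YM"
    and r: "r < aut_order x" "u \<in> eig_part smul x r" and p: "p < 2" "u \<in> par_space smul Y om p"
    and m: "m - of_nat r / of_nat (aut_order x) \<in> \<int>"
  shows "YM (Y om 0 u) m w = smulM (- of_rat m) (YM u (m - 1) w)"
proof -
  interpret vM: vector_space smulM using lin_vs1[OF M_lin1[OF M]] .
  have vacp: "vac \<in> par_space smul Y om 0" using wt_par[OF V vac_wt[OF V]] by simp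
  have J: "Sum_any (\<lambda>i::nat. smulM ((of_rat m::complex) gchoose i)
                     (YM (Y u (-2 + int i) vac) (m + 0 - of_nat i) w))
        = Sum_any (\<lambda>i::nat. smulM ((-1)^i * ((of_int (-2)::complex) gchoose i))
            (YM u (m + of_int (-2) - of_nat i) (YM vac (0 + of_nat i) w)
             - smulM ((-1)^(p * 0) * (-1) ^ nat \<bar>-2\<bar>) (YM vac (0 + of_int (-2) - of_nat i) (YM u (m + of_nat i) w))))"
    by (rule M_jac[OF M r(1) p(1) _ r(2) p(2) vacp m]) simp
  have R: "(\<lambda>i::nat. smulM ((-1)^i * ((of_int (-2)::complex) gchoose i))
            (YM u (m + of_int (-2) - of_nat i) (YM vac (0 + of_nat i) w)
             - smulM ((-1)^(p * 0) * (-1) ^ nat \<bar>-2\<bar>) (YM vac (0 + of_int (-2) - of_nat i) (YM u (m + of_nat i) w))))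
        = (\<lambda>i. 0)"
  proof (rule ext)
    fix i :: nat
    have a: "(0::rat) + of_nat i \<noteq> -1" by simp
    have b: "(0::rat) + of_int (-2) - of_nat i \<noteq> -1" by simp
    show "smulM ((-1)^i * ((of_int (-2)::complex) gchoose i))
            (YM u (m + of_int (-2) - of_nat i) (YM vac (0 + of_nat i) w)
             - smulM ((-1)^(p * 0) * (-1) ^ nat \<bar>-2\<bar>) (YM vac (0 + of_int (-2) - of_nat i) (YM u (m + of_nat i) w))) = 0"
      unfolding M_vac[OF M] using a b by (simp only: if_False lin_0[OF M_lin1[OF M]] vM.scale_zero_right diff_zero)
  qed
  define f where "f = (\<lambda>i::nat. smulM ((of_rat m::complex) gchoose i)
                     (YM (Y u (-2 + int i) vac) (m + 0 - of_nat i) w))"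
  have sub: "{i. f i \<noteq> 0} \<subseteq> {0, 1}"
  proof
    fix i assume "i \<in> {i. f i \<noteq> 0}"
    moreover have "i \<ge> 2 \<Longrightarrow> f i = 0"
      unfolding f_def using V_cre[OF V, of "-2 + int i" u] lin_0[OF M_lin2[OF M]] by simp
    ultimately show "i \<in> {0, 1}" by force
  qed
  have S0: "Sum_any f = 0" using J unfolding f_def R by simp
  have "Sum_any f = f 0 + f 1"
    by (subst Sum_any.expand_superset[OF _ sub]) simp_all
  also have "\<dots> = YM (Y om 0 u) m w + smulM (of_rat m) (YM u (m - 1) w)"
    unfolding f_def using V_Lm1[OF V, of u] V_cre1[OF V, of u] by simp
  finally have "YM (Y om 0 u) m w + smulM (of_rat m) (YM u (m - 1) w) = 0"
    using S0 by simp
  then show ?thesis by (simp add: eq_neg_iff_add_eq_0[symmetric] vM.scale_minus_left)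
qed




lemma gchoose_one_ge2: "i \<ge> 2 \<Longrightarrow> (1::complex) gchoose i = 0"
proof -
  assume "i \<ge> 2"
  then have "(1::nat) choose i = 0" by (simp add: binomial_eq_0)
  then show ?thesis using binomial_gbinomial[of 1 i, where 'a=complex] by (simp add: binomial_eq_0)
qed

lemma M_comm:
  assumes V: "is_VOSA smul Y vac om" and M: "is_twisted_module smul Y vac om sig x smulM YM"
    and xom: "x om = om" and Tpos: "0 < aut_order x"
    and r: "r < aut_order x" "u \<in> eig_part smul x r"
    and k: "u \<in> wt_space smul Y om (of_int k / 2)"
    and q: "q - of_nat r / of_nat (aut_order x) \<in> \<int>"
    and w: "YM om 1 w = smulM lam w"
  shows "YM om 1 (YM u q w) = smulM (lam + of_int k / 2 - of_rat q - 1) (YM u q w)"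
proof -
  interpret vM: vector_space smulM using lin_vs1[OF M_lin1[OF M]] .
  interpret vV: vector_space smul using V_vs[OF V] .
  have omeig: "om \<in> eig_part smul x 0" using xom by (simp add: eig_part_def)
  have omp: "om \<in> par_space smul Y om 0" using wt_par[OF V om_wt[OF V]] by simp
  have up: "u \<in> par_space smul Y om (nat (k mod 2))" using wt_par[OF V k] .
  have s2: "nat (k mod 2) < 2" by simp
  let ?s = "nat (k mod 2)"
  have J: "Sum_any (\<lambda>i::nat. smulM ((of_rat 1::complex) gchoose i)
                     (YM (Y om (0 + int i) u) (1 + q - of_nat i) w))
        = Sum_any (\<lambda>i::nat. smulM ((-1)^i * ((of_int 0::complex) gchoose i))
            (YM om (1 + of_int 0 - of_nat i) (YM u (q + of_nat i) w)
             - smulM ((-1)^(0 * ?s) * (-1) ^ nat \<bar>0\<bar>) (YM u (q + of_int 0 - of_nat i) (YM om (1 + of_nat i) w))))"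
    by (rule M_jac[OF M Tpos _ s2 omeig omp up]) simp_all
  define f where "f = (\<lambda>i::nat. smulM ((of_rat 1::complex) gchoose i)
                     (YM (Y om (0 + int i) u) (1 + q - of_nat i) w))"
  define g where "g = (\<lambda>i::nat. smulM ((-1)^i * ((of_int 0::complex) gchoose i))
            (YM om (1 + of_int 0 - of_nat i) (YM u (q + of_nat i) w)
             - smulM ((-1)^(0 * ?s) * (-1) ^ nat \<bar>0\<bar>) (YM u (q + of_int 0 - of_nat i) (YM om (1 + of_nat i) w))))"
  have subf: "{i. f i \<noteq> 0} \<subseteq> {0, 1}"
  proof
    fix i assume "i \<in> {i. f i \<noteq> 0}"
    moreover have "i \<ge> 2 \<Longrightarrow> f i = 0"
      unfolding f_def using gchoose_one_ge2[of i] by simp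
    ultimately show "i \<in> {0, 1}" by force
  qed
  have subg: "{i. g i \<noteq> 0} \<subseteq> {0}"
  proof
    fix i assume "i \<in> {i. g i \<noteq> 0}"
    moreover have "i \<ge> 1 \<Longrightarrow> g i = 0"
      unfolding g_def by (simp add: gbinomial_0_left)
    ultimately show "i \<in> {0}" by force
  qed
  have "Sum_any f = f 0 + f 1"
    by (subst Sum_any.expand_superset[OF _ subf]) simp_all
  also have "\<dots> = YM (Y om 0 u) (1 + q) w + YM (Y om 1 u) q w"
    unfolding f_def by simp
  finally have LHS: "Sum_any f = YM (Y om 0 u) (1 + q) w + YM (Y om 1 u) q w" .
  have "Sum_any g = g 0"
    by (subst Sum_any.expand_superset[OF _ subg]) simp_all
  also have "\<dots> = YM om 1 (YM u q w) - YM u q (YM om 1 w)"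
    unfolding g_def by simp
  finally have RHS: "Sum_any g = YM om 1 (YM u q w) - YM u q (YM om 1 w)" .
  have q1: "(1 + q) - of_nat r / of_nat (aut_order x) \<in> \<int>"
  proof -
    have "(1 + q) - of_nat r / of_nat (aut_order x) = 1 + (q - of_nat r / of_nat (aut_order x))" by simp
    then show ?thesis using q by (metis Ints_1 Ints_add)
  qed
  have D1: "YM (Y om 0 u) (1 + q) w = smulM (- of_rat (1 + q)) (YM u q w)"
    using M_der[OF V M r _ up q1] s2 by simp
  have D2: "YM (Y om 1 u) q w = smulM (of_int k / 2) (YM u q w)"
    using k lin_scale[OF M_lin2[OF M]] by (simp add: wt_space_def)
  have D3: "YM u q (YM om 1 w) = smulM lam (YM u q w)"
    using w lin_scale[OF M_lin1[OF M]] by simp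
  have fg: "Sum_any f = Sum_any g" unfolding f_def g_def by (rule J)
  have E: "YM (Y om 0 u) (1 + q) w + YM (Y om 1 u) q w = YM om 1 (YM u q w) - YM u q (YM om 1 w)"
    using fg LHS RHS by simp
  have "YM om 1 (YM u q w) = YM u q (YM om 1 w) + (YM (Y om 0 u) (1 + q) w + YM (Y om 1 u) q w)"
    using E by (metis add.commute diff_add_cancel)
  also have "\<dots> = smulM lam (YM u q w) + smulM (- of_rat (1 + q)) (YM u q w) + smulM (of_int k / 2) (YM u q w)"
    unfolding D1 D2 D3 by (simp add: add.assoc)
  also have "\<dots> = smulM (lam + of_int k / 2 - of_rat q - 1) (YM u q w)"
  proof -
    have cc: "lam + of_int k / 2 - of_rat q - 1 = lam + (- of_rat (1 + q)) + of_int k / 2"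
      by (simp add: of_rat_add)
    show ?thesis by (simp only: cc vM.scale_left_distrib)
  qed
  finally show ?thesis .
qed




lemma root_unity_ne1:
  fixes T j :: nat assumes "0 < j" "j < T"
  shows "exp (2 * of_real pi * \<i> / of_nat T) ^ j \<noteq> 1"
proof
  assume h: "exp (2 * of_real pi * \<i> / of_nat T) ^ j = 1"
  have "exp (2 * of_real pi * \<i> / of_nat T) ^ j = exp (of_nat j * (2 * of_real pi * \<i> / of_nat T))"
    by (rule exp_of_nat_mult[symmetric])
  with h have "exp (of_nat j * (2 * of_real pi * \<i> / of_nat T)) = 1" by simp
  then obtain n :: int where n: "Im (of_nat j * (2 * of_real pi * \<i> / of_nat T)) = of_int (2 * n) * pi"
    unfolding exp_eq_1 by blast
  have "Im (of_nat j * (2 * of_real pi * \<i> / of_nat T)) = real j * 2 * pi / real T"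
    by (simp add: Im_divide_of_nat) 
  with n have "real j * 2 * pi / real T = of_int (2 * n) * pi" by simp
  then have "real j = real_of_int n * real T" using assms by (simp add: field_simps)
  then have "int j = n * int T" by (metis of_int_eq_iff of_int_mult of_int_of_nat_eq)
  moreover have "0 < n" using \<open>int j = n * int T\<close> assms by (smt (verit) mult_nonpos_nonneg of_nat_0_less_iff of_nat_0_le_iff)
  ultimately have "int T \<le> int j" by (smt (verit) mult_le_cancel_right1 of_nat_0_le_iff)
  with assms show False by simp
qed

lemma geom_root_unity:
  fixes T j :: nat assumes "j < T"
  shows "(\<Sum>r<T. exp (2 * of_real pi * \<i> / of_nat T) ^ (r * j)) = (if j = 0 then of_nat T else 0)"
proof (cases "j = 0")
  case True then show ?thesis by simp
next
  case False
  let ?z = "exp (2 * of_real pi * \<i> / of_nat T) ^ j"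
  have ne: "?z \<noteq> 1" using root_unity_ne1[of j T] False assms by simp
  have wT: "exp (2 * of_real pi * \<i> / of_nat T) ^ T = 1"
  proof -
    have "exp (2 * of_real pi * \<i> / of_nat T) ^ T = exp (of_nat T * (2 * of_real pi * \<i> / of_nat T))"
      by (rule exp_of_nat_mult[symmetric])
    also have "\<dots> = 1" using assms by simp
    finally show ?thesis .
  qed
  have zT: "?z ^ T = 1" using wT by (metis power_mult mult.commute power_one)
  have "(\<Sum>r<T. exp (2 * of_real pi * \<i> / of_nat T) ^ (r * j)) = (\<Sum>r<T. ?z ^ r)"
    by (intro sum.cong refl) (metis power_mult mult.commute)
  also have "\<dots> = 0" using geometric_sum[OF ne, of T] zT by simp
  finally show ?thesis using False by simp
qed




lemma decomp:
  assumes vs: "vector_space smul" and linx: "Vector_Spaces.linear smul smul x"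
    and Tpos: "0 < aut_order x" and xT: "x ^^ aut_order x = id"
    and W: "module.subspace smul W" and xW: "\<forall>u\<in>W. x u \<in> W" and u: "u \<in> W"
  shows "u \<in> module.span smul {v \<in> W. \<exists>r<aut_order x. v \<in> eig_part smul x r}"
proof -
  interpret vector_space smul by (rule vs)
  define T where "T = aut_order x"
  define w where "w = exp (2 * of_real pi * \<i> / of_nat T)"
  define b where "b r j = smul (w ^ (r * j)) ((x ^^ j) u)" for r j
  define P where "P r = smul (1 / of_nat T) (\<Sum>j<T. b r j)" for r
  have T0: "T > 0" using Tpos by (simp add: T_def)
  have xjW: "(x ^^ j) u \<in> W" for j
    by (induction j) (use u xW in auto)
  have PW: "P r \<in> W" for r
    unfolding P_def b_def using W xjW
    by (intro subspace_scale subspace_sum) auto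
  have wT: "w ^ T = 1"
  proof -
    have "w ^ T = exp (of_nat T * (2 * of_real pi * \<i> / of_nat T))"
      unfolding w_def by (rule exp_of_nat_mult[symmetric])
    also have "\<dots> = 1" using T0 by simp
    finally show ?thesis .
  qed
  have ew: "exp (- 2 * of_real pi * \<i> * of_nat r / of_nat T) * w ^ r = 1" for r
  proof -
    have "w ^ r = exp (of_nat r * (2 * of_real pi * \<i> / of_nat T))"
      unfolding w_def by (rule exp_of_nat_mult[symmetric])
    then have "exp (- 2 * of_real pi * \<i> * of_nat r / of_nat T) * w ^ r
        = exp (- 2 * of_real pi * \<i> * of_nat r / of_nat T + of_nat r * (2 * of_real pi * \<i> / of_nat T))"
      by (simp only: exp_add)
    also have "- 2 * of_real pi * \<i> * of_nat r / of_nat T + of_nat r * (2 * of_real pi * \<i> / of_nat T) = 0"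
      by (simp add: field_simps)
    also have "exp 0 = 1" by simp
    finally show ?thesis .
  qed
  have eig: "x (P r) = smul (exp (- 2 * of_real pi * \<i> * of_nat r / of_nat T)) (P r)" for r
  proof -
    let ?e = "exp (- 2 * of_real pi * \<i> * of_nat r / of_nat T)"
    have xb: "x (b r j) = smul ?e (b r (Suc j))" for j
    proof -
      have "x (b r j) = smul (w ^ (r * j)) ((x ^^ Suc j) u)"
        unfolding b_def by (simp add: lin_scale[OF linx])
      also have "w ^ (r * j) = ?e * w ^ (r * Suc j)"
        using ew[of r] by (simp add: power_add mult.assoc[symmetric] mult.commute[of _ "w ^ r"])
      finally show ?thesis unfolding b_def by simp
    qed
    have bT: "b r T = b r 0"
      unfolding b_def using xT wT by (simp add: T_def[symmetric] power_mult[symmetric] mult.commute[of r] power_mult)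
    have shift: "(\<Sum>j<T. b r (Suc j)) = (\<Sum>j<T. b r j)"
    proof -
      have "(\<Sum>j<Suc T. b r j) = b r 0 + (\<Sum>j<T. b r (Suc j))" by (rule sum.lessThan_Suc_shift)
      moreover have "(\<Sum>j<Suc T. b r j) = (\<Sum>j<T. b r j) + b r T" by simp
      ultimately show ?thesis using bT by (simp add: add.commute)
    qed
    have "x (P r) = smul (1 / of_nat T) (\<Sum>j<T. x (b r j))"
      unfolding P_def by (simp add: lin_scale[OF linx] lin_sum[OF linx])
    also have "\<dots> = smul (1 / of_nat T) (smul ?e (\<Sum>j<T. b r j))"
      by (simp add: xb scale_sum_right shift[symmetric])
    also have "\<dots> = smul ?e (P r)" unfolding P_def by (simp add: mult.commute)
    finally show ?thesis .
  qed
  have sumP: "(\<Sum>r<T. P r) = u"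
  proof -
    have "(\<Sum>r<T. (\<Sum>j<T. b r j)) = (\<Sum>j<T. (\<Sum>r<T. b r j))" by (rule sum.swap)
    also have "\<dots> = (\<Sum>j<T. smul (\<Sum>r<T. w ^ (r * j)) ((x ^^ j) u))"
      unfolding b_def by (simp add: scale_sum_left)
    also have "\<dots> = (\<Sum>j<T. if j = 0 then smul (of_nat T) u else 0)"
      by (intro sum.cong refl) (simp add: w_def geom_root_unity)
    also have "\<dots> = smul (of_nat T) u" using T0 by (simp add: sum.delta)
    finally have "(\<Sum>r<T. (\<Sum>j<T. b r j)) = smul (of_nat T) u" .
    then show ?thesis unfolding P_def using T0 by (simp add: scale_sum_right[symmetric])
  qed
  have "P r \<in> span {v \<in> W. \<exists>r<aut_order x. v \<in> eig_part smul x r}" if "r < T" for r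
    using that PW eig by (intro span_base) (auto simp: eig_part_def T_def)
  then have "(\<Sum>r<T. P r) \<in> span {v \<in> W. \<exists>r<aut_order x. v \<in> eig_part smul x r}"
    by (intro span_sum) auto
  then show ?thesis using sumP by simp
qed




lemma sign_exp: "exp (of_int k * (of_real pi * \<i>)) = (if even k then 1 else (-1::complex))"
proof (cases "even k")
  case True
  then obtain a where k: "k = 2 * a" by blast
  have eq: "of_int k * (of_real pi * \<i>) = \<i> * (of_int a * (of_real pi * 2))" by (simp add: k algebra_simps)
  have "exp (of_int k * (of_real pi * \<i>)) = exp (\<i> * (of_int a * (of_real pi * 2)))" by (simp only: eq)
  also have "\<dots> = 1" by (rule exp_2pi_1_int)
  finally show ?thesis using True by simp
next
  case False
  then obtain a where k: "k = 2 * a + 1" using odd_two_times_div_two_succ by metis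
  have "of_int k * (of_real pi * \<i>) = \<i> * (of_int a * (of_real pi * 2)) + of_real pi * \<i>" by (simp add: k algebra_simps)
  then have "exp (of_int k * (of_real pi * \<i>)) = exp (\<i> * (of_int a * (of_real pi * 2))) * exp (of_real pi * \<i>)"
    by (simp only: exp_add)
  then show ?thesis using False by simp
qed

lemma phase:
  assumes "(of_rat q::complex) = of_nat r / of_nat T + of_int j"
  shows "exp (2 * of_real pi * \<i> * (lam + of_int k / 2 - of_rat q - 1))
       = exp (2 * of_real pi * \<i> * lam) * ((if even k then 1 else -1) * exp (- 2 * of_real pi * \<i> * of_nat r / of_nat T))"
proof -
  have "2 * of_real pi * \<i> * (lam + of_int k / 2 - of_rat q - 1)
      = 2 * of_real pi * \<i> * lam + (of_int k * (of_real pi * \<i>) + (- 2 * of_real pi * \<i> * of_nat r / of_nat T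
         + \<i> * (of_int (- j - 1) * (of_real pi * 2))))"
    by (simp add: assms algebra_simps diff_divide_distrib add_divide_distrib)
  then have "exp (2 * of_real pi * \<i> * (lam + of_int k / 2 - of_rat q - 1))
      = exp (2 * of_real pi * \<i> * lam) * (exp (of_int k * (of_real pi * \<i>)) * (exp (- 2 * of_real pi * \<i> * of_nat r / of_nat T)
         * exp (\<i> * (of_int (- j - 1) * (of_real pi * 2)))))"
    by (simp only: exp_add)
  also have "exp (\<i> * (of_int (- j - 1) * (of_real pi * 2))) = 1" by (rule exp_2pi_1_int)
  finally show ?thesis by (simp add: sign_exp)
qed

lemma wt_subspace:
  assumes V: "is_VOSA smul Y vac om"
  shows "module.subspace smul (wt_space smul Y om a)"
proof -
  interpret vector_space smul using V_vs[OF V] .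
  show ?thesis unfolding subspace_def wt_space_def
    using lin_0[OF V_lin1[OF V]] lin_add[OF V_lin1[OF V]] lin_scale[OF V_lin1[OF V]]
    by (auto simp: scale_right_distrib mult.commute)
qed




lemma core:
  assumes V: "is_VOSA smul Y vac om" and M: "is_twisted_module smul Y vac om sig x smulM YM"
    and linx: "Vector_Spaces.linear smul smul x"
    and xwt: "\<And>k u. u \<in> wt_space smul Y om (of_int k / 2) \<Longrightarrow> x u \<in> wt_space smul Y om (of_int k / 2)"
    and xom: "x om = om" and Tpos: "0 < aut_order x" and xT: "x ^^ aut_order x = id"
    and linh: "Vector_Spaces.linear smul smul h"
    and hx: "\<And>k r u. r < aut_order x \<Longrightarrow> u \<in> wt_space smul Y om (of_int k / 2) \<Longrightarrow> u \<in> eig_part smul x r \<Longrightarrow>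
        h u = smul ((if even k then 1 else -1) * exp (- 2 * of_real pi * \<i> * of_nat r / of_nat (aut_order x))) u"
    and surjh: "surj h"
  shows "module_iso smulM (\<lambda>v. YM (inv h v)) YM"
proof -
  interpret vV: vector_space smul using V_vs[OF V] .
  interpret S: spec smulM "YM om 1" by (rule spec.intro[OF M_lin1[OF M] M_span[OF M]])
  interpret vp: vector_space_pair smul smulM by unfold_locales
  define phi :: "complex \<Rightarrow> complex" where "phi z = exp (2 * of_real pi * \<i> * z)" for z
  define chi :: "complex \<Rightarrow> complex" where "chi z = exp (- (2 * of_real pi * \<i> * z))" for z
  define psi where "psi = S.Psi phi"
  have linpsi: "Vector_Spaces.linear smulM smulM psi" unfolding psi_def by (rule S.Psi_linear)
  define G where "G = {u. \<exists>k r. r < aut_order x \<and> u \<in> wt_space smul Y om (of_int k / 2) \<and> u \<in> eig_part smul x r}"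
  have spanG: "u \<in> vV.span G" for u
  proof -
    have "wt_space smul Y om (of_int k / 2) \<subseteq> vV.span G" for k
    proof
      fix v assume v: "v \<in> wt_space smul Y om (of_int k / 2)"
      have "v \<in> vV.span {v' \<in> wt_space smul Y om (of_int k / 2). \<exists>r<aut_order x. v' \<in> eig_part smul x r}"
        by (rule decomp[OF V_vs[OF V] linx Tpos xT wt_subspace[OF V] _ v]) (use xwt in blast)
      also have "\<dots> \<subseteq> vV.span G" by (rule vV.span_mono) (auto simp: G_def)
      finally show "v \<in> vV.span G" .
    qed
    then have "vV.span (\<Union>k::int. wt_space smul Y om (of_int k / 2)) \<subseteq> vV.span G"
      by (intro vV.span_minimal) auto
    then show ?thesis using V_span[OF V] by auto
  qed
  have key: "psi (YM u q w) = YM (h u) q (psi w)" for u q w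
  proof -
    have l1: "Vector_Spaces.linear smul smulM (\<lambda>u. psi (YM u q w))"
      using Vector_Spaces.linear_compose[OF M_lin2[OF M] linpsi] by (simp add: o_def)
    have l2: "Vector_Spaces.linear smul smulM (\<lambda>u. YM (h u) q (psi w))"
      using Vector_Spaces.linear_compose[OF linh M_lin2[OF M]] by (simp add: o_def)
    show ?thesis
    proof (rule vp.linear_eq_on[OF l1 l2 spanG])
      fix b assume "b \<in> G"
      then obtain k r where kr: "r < aut_order x" "b \<in> wt_space smul Y om (of_int k / 2)" "b \<in> eig_part smul x r"
        by (auto simp: G_def)
      define c where "c = (if even k then 1 else -1) * exp (- 2 * of_real pi * \<i> * of_nat r / of_nat (aut_order x))"
      have hb: "h b = smul c b" using hx[OF kr] by (simp add: c_def)
      have hbY: "YM (h b) q w' = smulM c (YM b q w')" for w'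
        using hb lin_scale[OF M_lin2[OF M]] by simp
      show "psi (YM b q w) = YM (h b) q (psi w)"
      proof (cases "q - of_nat r / of_nat (aut_order x) \<in> \<int>")
        case False
        then have z: "YM b q w' = 0" for w' using M_modes[OF M kr(1) kr(3)] by blast
        show ?thesis using hbY z lin_0[OF linpsi] by simp
      next
        case True
        then obtain j where j: "q - of_nat r / of_nat (aut_order x) = of_int j" by (auto elim: Ints_cases)
        then have qj: "q = of_nat r / of_nat (aut_order x) + of_int j" by (simp add: algebra_simps)
        have qc: "(of_rat q :: complex) = of_nat r / of_nat (aut_order x) + of_int j"
          unfolding qj by (simp add: of_rat_add of_rat_divide)
        have A: "Vector_Spaces.linear smulM smulM (\<lambda>w. psi (YM b q w))"
          using Vector_Spaces.linear_compose[OF M_lin1[OF M] linpsi] by (simp add: o_def)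
        have B: "Vector_Spaces.linear smulM smulM (\<lambda>w. YM (h b) q (psi w))"
          using Vector_Spaces.linear_compose[OF linpsi M_lin1[OF M]] by (simp add: o_def)
        show ?thesis
        proof (rule S.eq_on_E[OF A B])
          fix lam w' assume w': "w' \<in> S.E lam"
          have c1: "YM b q w' \<in> S.E (lam + of_int k / 2 - of_rat q - 1)"
            using M_comm[OF V M xom Tpos kr(1) kr(3) kr(2) True] w' by (simp add: S.E_def)
          have "psi (YM b q w') = smulM (phi (lam + of_int k / 2 - of_rat q - 1)) (YM b q w')"
            unfolding psi_def by (rule S.Psi_E[OF c1])
          also have "phi (lam + of_int k / 2 - of_rat q - 1) = phi lam * c"
            unfolding phi_def c_def by (rule phase[OF qc])
          also have "smulM (phi lam * c) (YM b q w') = YM (h b) q (psi w')"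
            using S.Psi_E[OF w', of phi] hbY lin_scale[OF M_lin1[OF M]]
            by (simp add: psi_def mult.commute)
          finally show "psi (YM b q w') = YM (h b) q (psi w')" .
        qed
      qed
    qed
  qed
  have inv1: "S.Psi chi (psi w) = w" for w
  proof -
    have "S.Psi chi (psi w) = S.Psi (\<lambda>lam. chi lam * phi lam) w" unfolding psi_def by (rule S.Psi_comp)
    also have "(\<lambda>lam. chi lam * phi lam) = (\<lambda>_. 1)" by (auto simp: chi_def phi_def exp_minus field_simps)
    finally show ?thesis by (simp add: S.Psi_one)
  qed
  have inv2: "psi (S.Psi chi w) = w" for w
  proof -
    have "psi (S.Psi chi w) = S.Psi (\<lambda>lam. phi lam * chi lam) w" unfolding psi_def by (rule S.Psi_comp)
    also have "(\<lambda>lam. phi lam * chi lam) = (\<lambda>_. 1)" by (auto simp: chi_def phi_def exp_minus field_simps)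
    finally show ?thesis by (simp add: S.Psi_one)
  qed
  have bij: "bij psi"
    by (rule bij_betw_byWitness[of UNIV "S.Psi chi"]) (auto simp: inv1 inv2 intro: range_eqI[of _ _ "S.Psi chi _"])
  show ?thesis unfolding module_iso_def
    using linpsi bij key surj_f_inv_f[OF surjh] by metis
qed




lemma sig_wt:
  assumes V: "is_VOSA smul Y vac om" and P: "is_parity_aut smul Y om sig"
    and u: "u \<in> wt_space smul Y om (of_int k / 2)"
  shows "sig u = (if even k then u else - u)"
proof -
  have up: "u \<in> par_space smul Y om (nat (k mod 2))" by (rule wt_par[OF V u])
  show ?thesis
  proof (cases "even k")
    case True
    then have "nat (k mod 2) = 0" by (simp add: even_iff_mod_2_eq_zero)
    then show ?thesis using up P True by (simp add: is_parity_aut_def)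
  next
    case False
    then have "nat (k mod 2) = 1" by (simp add: odd_iff_mod_2_eq_one)
    then show ?thesis using up P False by (simp add: is_parity_aut_def)
  qed
qed

lemma eq_on_wt:
  assumes V: "is_VOSA smul Y vac om"
    and l: "Vector_Spaces.linear smul smul f" "Vector_Spaces.linear smul smul f'"
    and e: "\<And>k u. u \<in> wt_space smul Y om (of_int k / 2) \<Longrightarrow> f u = f' u"
  shows "f u = f' u"
proof -
  interpret vV: vector_space smul using V_vs[OF V] .
  interpret vp: vector_space_pair smul smul by unfold_locales
  show ?thesis
    by (rule vp.linear_eq_on[OF l, of u "\<Union>k::int. wt_space smul Y om (of_int k / 2)"])
       (use V_span[OF V] e in auto)
qed

lemma aut_order_least:
  assumes "0 < n" "x ^^ n = id"
  shows "0 < aut_order x" "x ^^ aut_order x = id"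
proof -
  have "0 < aut_order x \<and> x ^^ aut_order x = id"
    unfolding aut_order_def by (rule LeastI[of _ n]) (use assms in simp)
  then show "0 < aut_order x" "x ^^ aut_order x = id" by auto
qed

lemma aut_order_id: "aut_order id = 1"
  unfolding aut_order_def by (rule Least_equality) auto

theorem lemma6p1:
  fixes smul :: "complex \<Rightarrow> 'v::ab_group_add \<Rightarrow> 'v"
    and Y :: "'v \<Rightarrow> int \<Rightarrow> 'v \<Rightarrow> 'v" and vac om :: 'v and sig :: "'v \<Rightarrow> 'v"
  assumes "is_VOSA smul Y vac om"
    and "is_parity_aut smul Y om sig"
  shows "(\<forall>g (smulM :: complex \<Rightarrow> 'm::ab_group_add \<Rightarrow> 'm) (YM :: 'v \<Rightarrow> rat \<Rightarrow> 'm \<Rightarrow> 'm).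
            is_aut smul Y vac om g \<and> finite_order g \<and>
            is_twisted_module smul Y vac om sig (g \<circ> sig) smulM YM \<and> simple_module smulM YM
            \<longrightarrow> module_iso smulM (comp_module g YM) YM)
       \<and> (\<forall>(smulM :: complex \<Rightarrow> 'm::ab_group_add \<Rightarrow> 'm) (YM :: 'v \<Rightarrow> rat \<Rightarrow> 'm \<Rightarrow> 'm).
            is_twisted_module smul Y vac om sig id smulM YM \<and> simple_module smulM YM
            \<longrightarrow> module_iso smulM (comp_module sig YM) YM)"
proof -
  note V = assms(1) and P = assms(2)
  interpret vV: vector_space smul using V_vs[OF V] .
  have linsig: "Vector_Spaces.linear smul smul sig" using P by (simp add: is_parity_aut_def)
  have sigsig: "sig (sig u) = u" for u
  proof -
    have "(sig \<circ> sig) u = id u"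
      by (rule eq_on_wt[OF V Vector_Spaces.linear_compose[OF linsig linsig] vV.linear_id])
         (use sig_wt[OF V P] lin_neg[OF linsig] in auto)
    then show ?thesis by simp
  qed
  have sigom: "sig om = om" using sig_wt[OF V P om_wt[OF V]] by simp
  have sigwt: "sig u \<in> wt_space smul Y om (of_int k / 2)" if "u \<in> wt_space smul Y om (of_int k / 2)" for u k
    using sig_wt[OF V P that] that wt_subspace[OF V] vV.subspace_neg by auto
  have part1: "module_iso smulM (comp_module g YM) YM"
    if g: "is_aut smul Y vac om g" "finite_order g" and M: "is_twisted_module smul Y vac om sig (g \<circ> sig) smulM YM"
    for g and smulM :: "complex \<Rightarrow> 'm::ab_group_add \<Rightarrow> 'm" and YM :: "'v \<Rightarrow> rat \<Rightarrow> 'm \<Rightarrow> 'm"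
  proof -
    have ling: "Vector_Spaces.linear smul smul g" and bijg: "bij g" and gom: "g om = om"
      and gY: "\<And>u n v. g (Y u n v) = Y (g u) n (g v)"
      using g(1) by (auto simp: is_aut_def)
    have gwt: "g u \<in> wt_space smul Y om a" if "u \<in> wt_space smul Y om a" for u a
    proof -
      have "Y om 1 (g u) = g (Y om 1 u)" using gY[of om 1 u] gom by simp
      also have "\<dots> = smul a (g u)" using that lin_scale[OF ling] by (simp add: wt_space_def)
      finally show ?thesis by (simp add: wt_space_def)
    qed
    have comm: "g (sig u) = sig (g u)" for u
    proof -
      have "(g \<circ> sig) u = (sig \<circ> g) u"
      proof (rule eq_on_wt[OF V Vector_Spaces.linear_compose[OF linsig ling] Vector_Spaces.linear_compose[OF ling linsig]])
        fix k u assume u: "u \<in> wt_space smul Y om (of_int k / 2)"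
        show "(g \<circ> sig) u = (sig \<circ> g) u"
          using sig_wt[OF V P u] sig_wt[OF V P gwt[OF u]] lin_neg[OF ling] by auto
      qed
      then show ?thesis by simp
    qed
    have comm_pow: "sig ((g ^^ n) u) = (g ^^ n) (sig u)" for n u
      by (induction n arbitrary: u) (simp_all add: comm[symmetric])
    have xpow: "((g \<circ> sig) ^^ n) u = (g ^^ n) ((sig ^^ n) u)" for n u
    proof (induction n arbitrary: u)
      case 0 then show ?case by simp
    next
      case (Suc n)
      have "((g \<circ> sig) ^^ Suc n) u = g (sig (((g \<circ> sig) ^^ n) u))" by simp
      also have "\<dots> = g (sig ((g ^^ n) ((sig ^^ n) u)))" by (simp only: Suc.IH)
      also have "\<dots> = g ((g ^^ n) (sig ((sig ^^ n) u)))" by (simp add: comm_pow)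
      also have "\<dots> = (g ^^ Suc n) ((sig ^^ Suc n) u)" by (simp add: funpow_swap1)
      finally show ?case .
    qed
    obtain N where N: "0 < N" "g ^^ N = id" using g(2) by (auto simp: finite_order_def)
    have sig2: "sig ^^ 2 = id" by (rule ext) (simp add: numeral_2_eq_2 sigsig)
    have "(g \<circ> sig) ^^ (2 * N) = id"
    proof (rule ext)
      fix u
      have "(g ^^ (2 * N)) = id" by (simp add: mult.commute[of 2 N] funpow_mult[symmetric] N(2))
      moreover have "(sig ^^ (2 * N)) = id" by (simp add: funpow_mult[symmetric] sig2)
      ultimately show "((g \<circ> sig) ^^ (2 * N)) u = id u" by (simp add: xpow)
    qed
    then have T: "0 < aut_order (g \<circ> sig)" "(g \<circ> sig) ^^ aut_order (g \<circ> sig) = id"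
      using aut_order_least[of "2 * N" "g \<circ> sig"] N(1) by auto
    have linx: "Vector_Spaces.linear smul smul (g \<circ> sig)" by (rule Vector_Spaces.linear_compose[OF linsig ling])
    have hx: "g u = smul ((if even k then 1 else -1) * exp (- 2 * of_real pi * \<i> * of_nat r / of_nat (aut_order (g \<circ> sig)))) u"
      if "r < aut_order (g \<circ> sig)" "u \<in> wt_space smul Y om (of_int k / 2)" "u \<in> eig_part smul (g \<circ> sig) r" for k r u
    proof -
      let ?e = "exp (- 2 * of_real pi * \<i> * of_nat r / of_nat (aut_order (g \<circ> sig)))"
      have xu: "g (sig u) = smul ?e u" using that(3) by (simp add: eig_part_def)
      show ?thesis
      proof (cases "even k")
        case True then show ?thesis using xu sig_wt[OF V P that(2)] by simp
      next
        case False
        then have "- g u = smul ?e u" using xu sig_wt[OF V P that(2)] lin_neg[OF ling] by simp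
        then have "g u = - smul ?e u" by (metis minus_minus)
        then show ?thesis using False by (simp add: vV.scale_minus_left)
      qed
    qed
    have xwt: "\<And>k u. u \<in> wt_space smul Y om (of_int k / 2) \<Longrightarrow> (g \<circ> sig) u \<in> wt_space smul Y om (of_int k / 2)"
      using sigwt gwt by simp
    have xom: "(g \<circ> sig) om = om" using sigom gom by simp
    have sg: "surj g" using bijg by (simp add: bij_is_surj)
    have "module_iso smulM (\<lambda>v. YM (inv g v)) YM"
      by (rule core[OF V M linx xwt xom T ling hx sg])
    then show ?thesis by (simp add: comp_module_def)
  qed
  have part2: "module_iso smulM (comp_module sig YM) YM"
    if M: "is_twisted_module smul Y vac om sig id smulM YM"
    for smulM :: "complex \<Rightarrow> 'm::ab_group_add \<Rightarrow> 'm" and YM :: "'v \<Rightarrow> rat \<Rightarrow> 'm \<Rightarrow> 'm"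
  proof -
    have "module_iso smulM (\<lambda>v. YM (inv sig v)) YM"
    proof (rule core[OF V M vV.linear_id _ _ _ _ linsig])
      show "0 < aut_order (id :: 'v \<Rightarrow> 'v)" by (simp add: aut_order_id)
      show "id ^^ aut_order (id :: 'v \<Rightarrow> 'v) = id" by (simp add: aut_order_id)
      show "surj sig" by (metis sigsig surjI)
      fix k r u assume r: "r < aut_order (id :: 'v \<Rightarrow> 'v)" and u: "u \<in> wt_space smul Y om (of_int k / 2)"
      have "r = 0" using r by (simp add: aut_order_id)
      then show "sig u = smul ((if even k then 1 else -1) * exp (- 2 * of_real pi * \<i> * of_nat r / of_nat (aut_order (id :: 'v \<Rightarrow> 'v)))) u"
        using sig_wt[OF V P u] by (simp add: vV.scale_minus_left)
    qed auto
    then show ?thesis by (simp add: comp_module_def)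
  qed
  show ?thesis using part1 part2 by blast
qed


end
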